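(* Let $m$ be a universal probability and let $R$ be a lower-computable semi-POVM. Then: (i) there exists $c>0$ such that for every unit vector $|\psi\rangle\in\mathbb{C}^N$ and every $s\in\Sigma^*$, $\langle\psi|R(s)|\psi\rangle\le c\,m(s)$; (ii) there exists $c>0$ such that for every density matrix $\rho\in\mathrm{Her}(N)$ and every $s\in\Sigma^*$, $\operatorname{tr}(\rho R(s))\le c\,m(s)$.
   Context: $N$ is a fixed positive integer; $\Sigma^*$ is the set of finite binary strings. $\mathrm{Her}(N)$ is the set of $N\times N$ Hermitian matrices and $\mathrm{Her}_Q(N)$ those with entries in $\{a+ib:a,b\in\mathbb{Q}\}$; $A\leqslant B$ means $B-A$ is positive semi-definite. A density matrix is $\rho\in\mathrm{Her}(N)$, $0\leqslant\rho$, $\operatorname{tr}\rho=1$. A lower-computable semi-measure is a function $r:\Sigma^*\to[0,\infty)$ with $\sum_s r(s)\le 1$ such that there is a total recursive $f:\mathbb{N}\times\Sigma^*\to\mathbb{Q}$ with $\lim_{n}f(n,s)=r(s)$ and $f(n,s)\le f(n+1,s)$ for all $n,s$. A universal probability is a lower-computable semi-measure $m$ such that for every lower-computable semi-measure $r$ there is $c>0$ with $c\,r(s)\le m(s)$ for all $s$. A semi-POVM on $\Sigma^*$ is a map $R:\Sigma^*\to\mathrm{Her}(N)$ with $0\leqslant R(s)$ for all $s$ and $\sum_s R(s)\leqslant I$. A lower-computable semi-POVM is a semi-POVM $R$ for which there is a total recursive $f:\mathbb{N}\times\Sigma^*\to\mathrm{Her}_Q(N)$ with $\lim_{n}f(n,s)=R(s)$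 and $f(n,s)\leqslant R(s)$ for all $n,s$. *)

theory Defs
  imports "HOL-Analysis.Infinite_Sum" "HOL-Library.Nat_Bijection" "Jordan_Normal_Form.Matrix"
begin

inductive total_rec :: "nat \<Rightarrow> (nat list \<Rightarrow> nat) \<Rightarrow> bool" where
  tr_zero: "total_rec n (\<lambda>xs. 0)"
| tr_succ: "total_rec 1 (\<lambda>xs. Suc (hd xs))"
| tr_proj: "i < n \<Longrightarrow> total_rec n (\<lambda>xs. xs ! i)"
| tr_comp: "total_rec m g \<Longrightarrow> length fs = m \<Longrightarrow> (\<forall>f\<in>set fs. total_rec n f)
            \<Longrightarrow> total_rec n (\<lambda>xs. g (map (\<lambda>f. f xs) fs))"
| tr_prim: "total_rec n g \<Longrightarrow> total_rec (Suc (Suc n)) h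
            \<Longrightarrow> total_rec (Suc n) (\<lambda>xs. rec_nat (g (tl xs)) (\<lambda>k r. h (k # r # tl xs)) (hd xs))"
| tr_mu: "total_rec (Suc n) g \<Longrightarrow> (\<forall>xs. length xs = n \<longrightarrow> (\<exists>y. g (y # xs) = 0))
            \<Longrightarrow> total_rec n (\<lambda>xs. LEAST y. g (y # xs) = 0)"

definition computable :: "(nat \<Rightarrow> nat) \<Rightarrow> bool" where
  "computable F \<longleftrightarrow> (\<exists>f. total_rec 1 f \<and> (\<forall>x. f [x] = F x))"

text \<open>Bijective binary numeration: a bijection between binary strings and nat.\<close>
fun str_code :: "bool list \<Rightarrow> nat" where
  "str_code [] = 0"
| "str_code (b # bs) = 2 * str_code bs + (if b then 2 else 1)"

definition rat_decode :: "nat \<Rightarrow> rat" where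
  "rat_decode c = (case prod_decode c of (p, d) \<Rightarrow> of_int (int_decode p) / of_nat (Suc d))"

definition gauss_decode :: "nat \<Rightarrow> complex" where
  "gauss_decode c = (case prod_decode c of (a, b) \<Rightarrow>
      Complex (of_rat (rat_decode a)) (of_rat (rat_decode b)))"

definition mat_decode :: "nat \<Rightarrow> nat \<Rightarrow> complex mat" where
  "mat_decode N c = (let xs = list_decode c in
      mat N N (\<lambda>(i, j). if i * N + j < length xs then gauss_decode (xs ! (i * N + j)) else 0))"

definition hermitian :: "nat \<Rightarrow> complex mat \<Rightarrow> bool" where
  "hermitian N A \<longleftrightarrow> A \<in> carrier_mat N N \<and> (\<forall>i<N. \<forall>j<N. A $$ (i, j) = cnj (A $$ (j, i)))"

definition gauss_rat :: "complex \<Rightarrow> bool" where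
  "gauss_rat z \<longleftrightarrow> Re z \<in> \<rat> \<and> Im z \<in> \<rat>"

definition hermitian_Q :: "nat \<Rightarrow> complex mat \<Rightarrow> bool" where
  "hermitian_Q N A \<longleftrightarrow> hermitian N A \<and> (\<forall>i<N. \<forall>j<N. gauss_rat (A $$ (i, j)))"

definition psd :: "nat \<Rightarrow> complex mat \<Rightarrow> bool" where
  "psd N A \<longleftrightarrow> hermitian N A \<and>
     (\<forall>v \<in> carrier_vec N. 0 \<le> Re (conjugate v \<bullet> (A *\<^sub>v v)))"

definition loewner_le :: "nat \<Rightarrow> complex mat \<Rightarrow> complex mat \<Rightarrow> bool" where
  "loewner_le N A B \<longleftrightarrow> hermitian N A \<and> hermitian N B \<and> psd N (B - A)"

definition mat_trace :: "nat \<Rightarrow> complex mat \<Rightarrow> complex" where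
  "mat_trace N A = (\<Sum>i<N. A $$ (i, i))"

definition density_matrix :: "nat \<Rightarrow> complex mat \<Rightarrow> bool" where
  "density_matrix N \<rho> \<longleftrightarrow> hermitian N \<rho> \<and> loewner_le N (0\<^sub>m N N) \<rho> \<and> mat_trace N \<rho> = 1"

definition unit_vector :: "nat \<Rightarrow> complex vec \<Rightarrow> bool" where
  "unit_vector N \<psi> \<longleftrightarrow> \<psi> \<in> carrier_vec N \<and> (\<Sum>i<N. (cmod (\<psi> $ i))\<^sup>2) = 1"

definition semi_measure :: "(bool list \<Rightarrow> real) \<Rightarrow> bool" where
  "semi_measure r \<longleftrightarrow> (\<forall>s. 0 \<le> r s) \<and> r summable_on UNIV \<and> (\<Sum>\<^sub>\<infinity>s. r s) \<le> 1"

definition lower_computable_semi_measure :: "(bool list \<Rightarrow> real) \<Rightarrow> bool" where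
  "lower_computable_semi_measure r \<longleftrightarrow> semi_measure r \<and>
     (\<exists>F. computable F \<and>
        (\<forall>s. (\<lambda>n. real_of_rat (rat_decode (F (prod_encode (n, str_code s))))) \<longlonglongrightarrow> r s) \<and>
        (\<forall>n s. rat_decode (F (prod_encode (n, str_code s)))
               \<le> rat_decode (F (prod_encode (Suc n, str_code s)))))"

definition universal_probability :: "(bool list \<Rightarrow> real) \<Rightarrow> bool" where
  "universal_probability m \<longleftrightarrow> lower_computable_semi_measure m \<and>
     (\<forall>r. lower_computable_semi_measure r \<longrightarrow> (\<exists>c>0. \<forall>s. c * r s \<le> m s))"

definition mat_sum :: "nat \<Rightarrow> (bool list \<Rightarrow> complex mat) \<Rightarrow> bool list set \<Rightarrow> complex mat" where
  "mat_sum N R F = mat N N (\<lambda>(i, j). \<Sum>s\<in>F. R s $$ (i, j))"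

text \<open>Since all R(s) are positive, the series sum R(s) \<le> I means all finite partial sums are \<le> I.\<close>
definition semi_POVM :: "nat \<Rightarrow> (bool list \<Rightarrow> complex mat) \<Rightarrow> bool" where
  "semi_POVM N R \<longleftrightarrow> (\<forall>s. loewner_le N (0\<^sub>m N N) (R s)) \<and>
     (\<forall>F. finite F \<longrightarrow> loewner_le N (mat_sum N R F) (1\<^sub>m N))"

definition mat_tendsto :: "nat \<Rightarrow> (nat \<Rightarrow> complex mat) \<Rightarrow> complex mat \<Rightarrow> bool" where
  "mat_tendsto N X A \<longleftrightarrow> (\<forall>i<N. \<forall>j<N. (\<lambda>n. X n $$ (i, j)) \<longlonglongrightarrow> A $$ (i, j))"

definition lower_computable_semi_POVM :: "nat \<Rightarrow> (bool list \<Rightarrow> complex mat) \<Rightarrow> bool" where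
  "lower_computable_semi_POVM N R \<longleftrightarrow> semi_POVM N R \<and>
     (\<exists>F. computable F \<and>
        (\<forall>n s. hermitian_Q N (mat_decode N (F (prod_encode (n, str_code s))))) \<and>
        (\<forall>s. mat_tendsto N (\<lambda>n. mat_decode N (F (prod_encode (n, str_code s)))) (R s)) \<and>
        (\<forall>n s. loewner_le N (mat_decode N (F (prod_encode (n, str_code s)))) (R s)))"

end

theory Submission
  imports Defs
begin


definition prec :: "nat \<Rightarrow> (nat list \<Rightarrow> nat) \<Rightarrow> bool" where
  "prec n F \<longleftrightarrow> (\<exists>f. total_rec n f \<and> (\<forall>xs. length xs = n \<longrightarrow> f xs = F xs))"

lemma prec_cong:
  assumes "prec n F" "\<And>xs. length xs = n \<Longrightarrow> F xs = G xs"
  shows "prec n G"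
proof -
  obtain f where "total_rec n f" "\<And>xs. length xs = n \<Longrightarrow> f xs = F xs"
    using assms(1) unfolding prec_def by blast
  then show ?thesis unfolding prec_def using assms(2) by (intro exI[of _ f]) simp
qed

lemma prec_proj: "i < n \<Longrightarrow> prec n (\<lambda>xs. xs ! i)"
  unfolding prec_def by (blast intro: total_rec.intros)

lemma prec_zero: "prec n (\<lambda>xs. 0)"
  unfolding prec_def by (blast intro: total_rec.intros)

lemma prec_comp_gen:
  assumes g: "prec m G" and len: "length Fs = m" and fs: "\<forall>F\<in>set Fs. prec n F"
  shows "prec n (\<lambda>xs. G (map (\<lambda>F. F xs) Fs))"
proof -
  obtain g' where g': "total_rec m g'" "\<And>xs. length xs = m \<Longrightarrow> g' xs = G xs"
    using g unfolding prec_def by blast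
  define sel where "sel F = (SOME f. total_rec n f \<and> (\<forall>xs. length xs = n \<longrightarrow> f xs = F xs))" for F
  have sel: "total_rec n (sel F) \<and> (\<forall>xs. length xs = n \<longrightarrow> sel F xs = F xs)" if "F \<in> set Fs" for F
  proof -
    have "\<exists>f. total_rec n f \<and> (\<forall>xs. length xs = n \<longrightarrow> f xs = F xs)"
      using fs that unfolding prec_def by blast
    then show ?thesis unfolding sel_def by (rule someI_ex)
  qed
  let ?fs = "map sel Fs"
  have "total_rec n (\<lambda>xs. g' (map (\<lambda>f. f xs) ?fs))"
    by (rule tr_comp[OF g'(1)]) (use len sel in auto)
  moreover have "g' (map (\<lambda>f. f xs) ?fs) = G (map (\<lambda>F. F xs) Fs)" if "length xs = n" for xs
  proof -
    have eq: "map (\<lambda>f. f xs) ?fs = map (\<lambda>F. F xs) Fs"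
      unfolding map_map by (rule map_cong) (use sel that in auto)
    show ?thesis by (subst eq) (rule g'(2), simp add: len)
  qed
  ultimately show ?thesis unfolding prec_def by blast
qed

lemma prec_comp1:
  assumes "prec 1 (\<lambda>xs. g (xs ! 0))" "prec n F"
  shows "prec n (\<lambda>xs. g (F xs))"
  using prec_comp_gen[OF assms(1), of "[F]" n] assms(2) by simp

lemma prec_comp2:
  assumes "prec 2 (\<lambda>xs. g (xs ! 0) (xs ! 1))" "prec n F1" "prec n F2"
  shows "prec n (\<lambda>xs. g (F1 xs) (F2 xs))"
  using prec_comp_gen[OF assms(1), of "[F1, F2]" n] assms(2,3) by simp

lemma prec_comp3:
  assumes "prec 3 (\<lambda>xs. g (xs ! 0) (xs ! 1) (xs ! 2))" "prec n F1" "prec n F2" "prec n F3"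
  shows "prec n (\<lambda>xs. g (F1 xs) (F2 xs) (F3 xs))"
  using prec_comp_gen[OF assms(1), of "[F1, F2, F3]" n] assms(2-4) by (simp add: numeral_3_eq_3)

lemma prec_Suc: "prec n F \<Longrightarrow> prec n (\<lambda>xs. Suc (F xs))"
proof -
  have "prec 1 (\<lambda>xs. Suc (xs ! 0))"
    unfolding prec_def
    by (intro exI[of _ "\<lambda>xs. Suc (hd xs)"] conjI tr_succ) (auto simp: length_Suc_conv)
  then show "prec n F \<Longrightarrow> prec n (\<lambda>xs. Suc (F xs))" by (rule prec_comp1)
qed

lemma prec_const: "prec n (\<lambda>xs. k)"
proof (induction k)
  case 0 then show ?case by (rule prec_zero)
next
  case (Suc k) then show ?case using prec_Suc[OF Suc] by simp
qed

lemma prec_prim_raw: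
  assumes g: "prec n G" and h: "prec (Suc (Suc n)) H"
  shows "prec (Suc n) (\<lambda>xs. rec_nat (G (tl xs)) (\<lambda>k r. H (k # r # tl xs)) (hd xs))"
proof -
  obtain g' where g': "total_rec n g'" "\<And>xs. length xs = n \<Longrightarrow> g' xs = G xs"
    using g unfolding prec_def by blast
  obtain h' where h': "total_rec (Suc (Suc n)) h'" "\<And>xs. length xs = Suc (Suc n) \<Longrightarrow> h' xs = H xs"
    using h unfolding prec_def by blast
  have "rec_nat (g' (tl xs)) (\<lambda>k r. h' (k # r # tl xs)) x = rec_nat (G (tl xs)) (\<lambda>k r. H (k # r # tl xs)) x"
    if "length xs = Suc n" for xs x
    using that by (induction x) (auto simp: g'(2) h'(2))
  then show ?thesis unfolding prec_def
    by (intro exI[of _ "\<lambda>xs. rec_nat (g' (tl xs)) (\<lambda>k r. h' (k # r # tl xs)) (hd xs)"])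
       (auto intro: tr_prim[OF g'(1) h'(1)])
qed

lemma prec_mu_raw:
  assumes g: "prec (Suc n) G" and ex: "\<And>xs. length xs = n \<Longrightarrow> \<exists>y. G (y # xs) = 0"
  shows "prec n (\<lambda>xs. LEAST y. G (y # xs) = 0)"
proof -
  obtain g' where g': "total_rec (Suc n) g'" "\<And>xs. length xs = Suc n \<Longrightarrow> g' xs = G xs"
    using g unfolding prec_def by blast
  have "total_rec n (\<lambda>xs. LEAST y. g' (y # xs) = 0)"
    by (rule tr_mu[OF g'(1)]) (use ex g'(2) in auto)
  moreover have "(LEAST y. g' (y # xs) = 0) = (LEAST y. G (y # xs) = 0)" if "length xs = n" for xs
    using that g'(2) by simp
  ultimately show ?thesis unfolding prec_def by blast
qed

lemma prec_rec:
  assumes A: "prec n A" and B: "prec (Suc (Suc n)) (\<lambda>ys. B (ys ! 0) (ys ! 1) (drop 2 ys))"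
    and C: "prec n C"
  shows "prec n (\<lambda>xs. rec_nat (A xs) (\<lambda>k r. B k r xs) (C xs))"
proof -
  have P: "prec (Suc n) (\<lambda>ys. rec_nat (A (tl ys)) (\<lambda>k r. B k r (tl ys)) (hd ys))"
    using prec_prim_raw[OF A B] by simp
  let ?Fs = "C # map (\<lambda>i xs. xs ! i) [0..<n]"
  have P2: "prec n (\<lambda>xs. (\<lambda>ys. rec_nat (A (tl ys)) (\<lambda>k r. B k r (tl ys)) (hd ys)) (map (\<lambda>F. F xs) ?Fs))"
    by (rule prec_comp_gen[OF P]) (auto intro: C prec_proj)
  have E: "map (\<lambda>F. F xs) ?Fs = C xs # xs" if "length xs = n" for xs :: "nat list"
    using that map_nth[of xs] by (simp add: comp_def)
  show ?thesis by (rule prec_cong[OF P2]) (simp only: E list.sel)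
qed

lemma prec_mu:
  assumes g: "prec 2 (\<lambda>ys. G (ys ! 0) (ys ! 1))" and ex: "\<And>x. \<exists>y. G y x = 0"
  shows "prec 1 (\<lambda>xs. LEAST y. G y (xs ! 0) = 0)"
proof -
  have g2: "prec (Suc 1) (\<lambda>ys. G (ys ! 0) (ys ! 1))" using g by (simp add: numeral_2_eq_2)
  have "prec 1 (\<lambda>xs. LEAST y. (\<lambda>ys. G (ys ! 0) (ys ! 1)) (y # xs) = 0)"
    by (rule prec_mu_raw[OF g2]) (simp add: ex)
  then show ?thesis by simp
qed



declare prec_proj[intro!] prec_const[intro!] prec_Suc[intro!]

lemma prec_rec1:
  assumes "prec 1 (\<lambda>xs. A (xs ! 0))" "prec 3 (\<lambda>ys. B (ys ! 0) (ys ! 1) (ys ! 2))"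
    "prec 1 (\<lambda>xs. C (xs ! 0))"
  shows "prec 1 (\<lambda>xs. rec_nat (A (xs ! 0)) (\<lambda>k r. B k r (xs ! 0)) (C (xs ! 0)))"
proof (rule prec_rec[where B="\<lambda>k r zs. B k r (zs ! 0)"])
  show "prec (Suc (Suc 1)) (\<lambda>ys. B (ys ! 0) (ys ! 1) (drop 2 ys ! 0))"
  proof (rule prec_cong)
    show "prec (Suc (Suc 1)) (\<lambda>ys. B (ys ! 0) (ys ! 1) (ys ! 2))"
      using assms(2) by (simp add: numeral_3_eq_3)
  qed (auto simp: numeral_3_eq_3 length_Suc_conv)
qed (use assms in auto)

lemma prec_rec2:
  assumes "prec 2 (\<lambda>xs. A (xs ! 0) (xs ! 1))" "prec 4 (\<lambda>ys. B (ys ! 0) (ys ! 1) (ys ! 2) (ys ! 3))"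
    "prec 2 (\<lambda>xs. C (xs ! 0) (xs ! 1))"
  shows "prec 2 (\<lambda>xs. rec_nat (A (xs ! 0) (xs ! 1)) (\<lambda>k r. B k r (xs ! 0) (xs ! 1)) (C (xs ! 0) (xs ! 1)))"
proof (rule prec_rec[where B="\<lambda>k r zs. B k r (zs ! 0) (zs ! 1)"])
  show "prec (Suc (Suc 2)) (\<lambda>ys. B (ys ! 0) (ys ! 1) (drop 2 ys ! 0) (drop 2 ys ! 1))"
  proof (rule prec_cong)
    show "prec (Suc (Suc 2)) (\<lambda>ys. B (ys ! 0) (ys ! 1) (ys ! 2) (ys ! 3))"
      using assms(2) by (simp add: eval_nat_numeral)
  qed (auto simp: numeral_3_eq_3 numeral_2_eq_2 length_Suc_conv)
qed (use assms in auto)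

lemma add_base: "prec 2 (\<lambda>xs. xs ! 0 + xs ! 1)"
proof -
  have "prec 2 (\<lambda>xs. rec_nat (xs ! 1) (\<lambda>k r. Suc r) (xs ! 0))"
    by (rule prec_rec2[where A="\<lambda>x y. y" and B="\<lambda>k r x y. Suc r" and C="\<lambda>x y. x"]) auto
  moreover have "rec_nat y (\<lambda>k r. Suc r) x = x + y" for x y :: nat by (induction x) auto
  ultimately show ?thesis by (rule prec_cong)
qed

lemma prec_add[intro!]: "prec n F1 \<Longrightarrow> prec n F2 \<Longrightarrow> prec n (\<lambda>xs. F1 xs + F2 xs)"
  by (rule prec_comp2[OF add_base])

lemma mult_base: "prec 2 (\<lambda>xs. xs ! 0 * xs ! 1)"
proof -
  have "prec 2 (\<lambda>xs. rec_nat 0 (\<lambda>k r. r + xs ! 1) (xs ! 0))"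
    by (rule prec_rec2[where A="\<lambda>x y. 0" and B="\<lambda>k r x y. r + y" and C="\<lambda>x y. x"]) auto
  moreover have "rec_nat 0 (\<lambda>k r. r + y) x = x * y" for x y :: nat by (induction x) auto
  ultimately show ?thesis by (rule prec_cong)
qed

lemma prec_mult[intro!]: "prec n F1 \<Longrightarrow> prec n F2 \<Longrightarrow> prec n (\<lambda>xs. F1 xs * F2 xs)"
  by (rule prec_comp2[OF mult_base])

lemma pred_base: "prec 1 (\<lambda>xs. xs ! 0 - 1)"
proof -
  have "prec 1 (\<lambda>xs. rec_nat 0 (\<lambda>k r. k) (xs ! 0))"
    by (rule prec_rec1[where A="\<lambda>x. 0" and B="\<lambda>k r x. k" and C="\<lambda>x. x"]) auto
  moreover have "rec_nat 0 (\<lambda>k r. k) x = x - 1" for x :: nat by (induction x) auto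
  ultimately show ?thesis by (rule prec_cong)
qed

lemma prec_pred[intro!]: "prec n F1 \<Longrightarrow> prec n (\<lambda>xs. F1 xs - 1)"
  by (rule prec_comp1[OF pred_base])

lemma prec_pred'[intro!]: "prec n F1 \<Longrightarrow> prec n (\<lambda>xs. F1 xs - Suc 0)"
  using prec_pred by simp

lemma minus_base: "prec 2 (\<lambda>xs. xs ! 0 - xs ! 1)"
proof -
  have "prec 2 (\<lambda>xs. rec_nat (xs ! 0) (\<lambda>k r. r - 1) (xs ! 1))"
    by (rule prec_rec2[where A="\<lambda>x y. x" and B="\<lambda>k r x y. r - 1" and C="\<lambda>x y. y"]) auto
  moreover have "rec_nat x (\<lambda>k r. r - 1) y = x - y" for x y :: nat by (induction y) auto
  ultimately show ?thesis by (rule prec_cong)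
qed

lemma prec_minus[intro!]: "prec n F1 \<Longrightarrow> prec n F2 \<Longrightarrow> prec n (\<lambda>xs. F1 xs - F2 xs)"
  by (rule prec_comp2[OF minus_base])

lemma mod2_base: "prec 1 (\<lambda>xs. xs ! 0 mod 2)"
proof -
  have "prec 1 (\<lambda>xs. rec_nat 0 (\<lambda>k r. 1 - r) (xs ! 0))"
    by (rule prec_rec1[where A="\<lambda>x. 0" and B="\<lambda>k r x. 1 - r" and C="\<lambda>x. x"]) auto
  moreover have "rec_nat 0 (\<lambda>k r. 1 - r) x = x mod 2" for x :: nat
    by (induction x) (auto simp: mod_Suc)
  ultimately show ?thesis by (rule prec_cong)
qed

lemma prec_mod2[intro!]: "prec n F1 \<Longrightarrow> prec n (\<lambda>xs. F1 xs mod 2)"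
  by (rule prec_comp1[OF mod2_base])

lemma div2_base: "prec 1 (\<lambda>xs. xs ! 0 div 2)"
proof -
  have "prec 1 (\<lambda>xs. rec_nat 0 (\<lambda>k r. r + k mod 2) (xs ! 0))"
    by (rule prec_rec1[where A="\<lambda>x. 0" and B="\<lambda>k r x. r + k mod 2" and C="\<lambda>x. x"]) auto
  moreover have "rec_nat 0 (\<lambda>k r. r + k mod 2) x = x div 2" for x :: nat
    by (induction x) (auto simp: div_Suc mod_Suc)
  ultimately show ?thesis by (rule prec_cong)
qed

lemma prec_div2[intro!]: "prec n F1 \<Longrightarrow> prec n (\<lambda>xs. F1 xs div 2)"
  by (rule prec_comp1[OF div2_base])

lemma tri_base: "prec 1 (\<lambda>xs. triangle (xs ! 0))"
proof -
  have "prec 1 (\<lambda>xs. rec_nat 0 (\<lambda>k r. r + Suc k) (xs ! 0))"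
    by (rule prec_rec1[where A="\<lambda>x. 0" and B="\<lambda>k r x. r + Suc k" and C="\<lambda>x. x"]) auto
  moreover have "rec_nat 0 (\<lambda>k r. r + Suc k) x = triangle x" for x :: nat
    by (induction x) auto
  ultimately show ?thesis by (rule prec_cong)
qed

lemma prec_tri[intro!]: "prec n F1 \<Longrightarrow> prec n (\<lambda>xs. triangle (F1 xs))"
  by (rule prec_comp1[OF tri_base])

lemma ifle_eq: "(if (a::nat) \<le> b then x else y) = (1 - (a - b)) * x + (1 - (1 - (a - b))) * y"
  by auto

lemma prec_ifle[intro!]:
  assumes "prec n A" "prec n B" "prec n X" "prec n Y"
  shows "prec n (\<lambda>xs. if A xs \<le> B xs then X xs else Y xs)"
proof -
  have "prec n (\<lambda>xs. (1 - (A xs - B xs)) * X xs + (1 - (1 - (A xs - B xs))) * Y xs)"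
    by (intro prec_add prec_mult prec_minus prec_const assms)
  then show ?thesis by (rule prec_cong) (simp only: ifle_eq)
qed

definition sq :: "nat \<Rightarrow> nat" where
  "sq c = (LEAST y. Suc c - triangle (Suc y) = 0)"

lemma sq_base: "prec 1 (\<lambda>xs. sq (xs ! 0))"
  unfolding sq_def
proof (rule prec_mu)
  show "prec 2 (\<lambda>ys. Suc (ys ! 1) - triangle (Suc (ys ! 0)))"
    by auto
  show "\<exists>y. Suc x - triangle (Suc y) = 0" for x
    by (rule exI[of _ x]) (simp add: triangle_def)
qed

lemma prec_sq[intro!]: "prec n F1 \<Longrightarrow> prec n (\<lambda>xs. sq (F1 xs))"
  by (rule prec_comp1[OF sq_base])

definition pd1 :: "nat \<Rightarrow> nat" where "pd1 c = c - triangle (sq c)"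
definition pd2 :: "nat \<Rightarrow> nat" where "pd2 c = sq c - pd1 c"

lemma prec_pd1[intro!]: "prec n F1 \<Longrightarrow> prec n (\<lambda>xs. pd1 (F1 xs))"
  unfolding pd1_def by auto
lemma prec_pd2[intro!]: "prec n F1 \<Longrightarrow> prec n (\<lambda>xs. pd2 (F1 xs))"
  unfolding pd2_def pd1_def by auto

lemma sq_props: "triangle (sq c) \<le> c \<and> c < triangle (Suc (sq c))"
proof -
  have ex: "Suc c - triangle (Suc c) = 0" by (simp add: triangle_def)
  have 1: "Suc c - triangle (Suc (sq c)) = 0"
    unfolding sq_def by (rule LeastI[of _ c]) (rule ex)
  have 2: "triangle (sq c) \<le> c"
  proof (cases "sq c")
    case 0 then show ?thesis by simp
  next
    case (Suc k)
    have "\<not> (Suc c - triangle (Suc k) = 0)"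
      using not_less_Least[of k "\<lambda>y. Suc c - triangle (Suc y) = 0"] Suc unfolding sq_def by simp
    then show ?thesis using Suc by simp
  qed
  show ?thesis using 1 2 by simp
qed

lemma prod_decode_pd: "prod_decode c = (pd1 c, pd2 c)"
proof -
  from sq_props[of c] have a: "triangle (sq c) \<le> c" "c < triangle (sq c) + Suc (sq c)" by auto
  have "pd1 c \<le> sq c" using a unfolding pd1_def by linarith
  then have "prod_encode (pd1 c, pd2 c) = c"
    unfolding prod_encode_def pd2_def using a by (simp add: pd1_def)
  then show ?thesis by (metis prod_encode_inverse)
qed

lemma prec_pe[intro!]: "prec n F1 \<Longrightarrow> prec n F2 \<Longrightarrow> prec n (\<lambda>xs. prod_encode (F1 xs, F2 xs))"
  unfolding prod_encode_def by auto



definition tlc :: "nat \<Rightarrow> nat" where "tlc c = pd2 (c - 1)"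

lemma prec_tlc[intro!]: "prec n F1 \<Longrightarrow> prec n (\<lambda>xs. tlc (F1 xs))"
  unfolding tlc_def by auto

lemma prec_iter[intro!]: "prec n F1 \<Longrightarrow> prec n (\<lambda>xs. (tlc ^^ p) (F1 xs))"
proof (induction p)
  case 0 then show ?case by simp
next
  case (Suc p)
  then have "prec n (\<lambda>xs. tlc ((tlc ^^ p) (F1 xs)))" by auto
  then show ?case by simp
qed

lemma list_decode_tlc: "list_decode (tlc c) = tl (list_decode c)"
proof (cases c)
  case 0
  have "prod_decode 0 = (0, 0)" by (simp add: prod_decode_def prod_decode_aux.simps)
  then show ?thesis using 0 prod_decode_pd[of 0] by (simp add: tlc_def)
next
  case (Suc n)
  then show ?thesis by (simp add: tlc_def prod_decode_pd)
qed

lemma list_decode_iter: "list_decode ((tlc ^^ p) c) = drop p (list_decode c)"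
  by (induction p) (auto simp: list_decode_tlc drop_Suc tl_drop)

definition entc :: "nat \<Rightarrow> nat \<Rightarrow> nat" where
  "entc p c = (if (tlc ^^ p) c \<le> 0 then 0 else pd1 (pd1 ((tlc ^^ p) c - 1)))"

lemma prec_entc[intro!]: "prec n F1 \<Longrightarrow> prec n (\<lambda>xs. entc p (F1 xs))"
  unfolding entc_def by (intro prec_ifle prec_const prec_pd1 prec_pred' prec_iter prec_pred) auto

lemma entc_eq: "entc p c = (if p < length (list_decode c) then fst (prod_decode (list_decode c ! p)) else 0)"
proof -
  define d where "d = (tlc ^^ p) c"
  have D: "list_decode d = drop p (list_decode c)" unfolding d_def by (rule list_decode_iter)
  show ?thesis
  proof (cases d)
    case 0
    then have "\<not> p < length (list_decode c)" using D by simp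
    then show ?thesis unfolding entc_def d_def[symmetric] using 0 by simp
  next
    case (Suc n)
    then have L: "list_decode d = pd1 n # list_decode (pd2 n)" by (simp add: prod_decode_pd)
    then have "p < length (list_decode c)" using D by (metis drop_all leI list.distinct(1))
    moreover have "list_decode c ! p = pd1 n" using D L
      by (metis calculation hd_drop_conv_nth list.sel(1))
    ultimately show ?thesis unfolding entc_def d_def[symmetric] using Suc by (simp add: prod_decode_pd)
  qed
qed

definition Pp :: "nat \<Rightarrow> nat" where "Pp q = (1 - q mod 2) * (q div 2)"
definition Qp :: "nat \<Rightarrow> nat" where "Qp q = q mod 2 * (q div 2 + 1)"

lemma int_decode_PQ: "int_decode q = int (Pp q) - int (Qp q)"
  by (cases "even q") (auto simp: int_decode_def sum_decode_def Pp_def Qp_def elim!: oddE)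

lemma rat_decode_PQ: "rat_decode c = (of_int (int (Pp (pd1 c)) - int (Qp (pd1 c)))) / of_nat (Suc (pd2 c))"
  unfolding rat_decode_def prod_decode_pd by (simp add: int_decode_PQ)

definition lhsr :: "nat \<Rightarrow> nat \<Rightarrow> nat" where
  "lhsr a b = Pp (pd1 a) * Suc (pd2 b) + Qp (pd1 b) * Suc (pd2 a)"
definition rhsr :: "nat \<Rightarrow> nat \<Rightarrow> nat" where
  "rhsr a b = Pp (pd1 b) * Suc (pd2 a) + Qp (pd1 a) * Suc (pd2 b)"

lemma prec_lhsr[intro!]: "prec n F1 \<Longrightarrow> prec n F2 \<Longrightarrow> prec n (\<lambda>xs. lhsr (F1 xs) (F2 xs))"
  unfolding lhsr_def Pp_def Qp_def by (intro prec_add prec_mult prec_minus prec_const prec_div2 prec_mod2 prec_pd1 prec_pd2 prec_Suc)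
lemma prec_rhsr[intro!]: "prec n F1 \<Longrightarrow> prec n F2 \<Longrightarrow> prec n (\<lambda>xs. rhsr (F1 xs) (F2 xs))"
  unfolding rhsr_def Pp_def Qp_def by (intro prec_add prec_mult prec_minus prec_const prec_div2 prec_mod2 prec_pd1 prec_pd2 prec_Suc)

lemma rle: "lhsr a b \<le> rhsr a b \<longleftrightarrow> rat_decode a \<le> rat_decode b"
proof -
  define P1 Q1 D1 P2 Q2 D2 where "P1 = Pp (pd1 a)" "Q1 = Qp (pd1 a)" "D1 = Suc (pd2 a)"
    "P2 = Pp (pd1 b)" "Q2 = Qp (pd1 b)" "D2 = Suc (pd2 b)"
  have "rat_decode a \<le> rat_decode b \<longleftrightarrow>
      (of_int (int P1 - int Q1)) / of_nat D1 \<le> (of_int (int P2 - int Q2)) / (of_nat D2 :: rat)"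
    unfolding rat_decode_PQ P1_Q1_D1_P2_Q2_D2_def ..
  also have "\<dots> \<longleftrightarrow> (of_int (int P1 - int Q1)) * of_nat D2 \<le> (of_int (int P2 - int Q2)) * (of_nat D1 :: rat)"
    unfolding P1_Q1_D1_P2_Q2_D2_def by (simp add: divide_simps)
  also have "\<dots> \<longleftrightarrow> (int P1 - int Q1) * int D2 \<le> (int P2 - int Q2) * int D1"
    by (metis (no_types, opaque_lifting) of_int_le_iff of_int_mult of_int_of_nat_eq)
  also have "\<dots> \<longleftrightarrow> int (P1 * D2 + Q2 * D1) \<le> int (P2 * D1 + Q1 * D2)"
    by (simp add: algebra_simps)
  also have "\<dots> \<longleftrightarrow> lhsr a b \<le> rhsr a b"
    unfolding lhsr_def rhsr_def P1_Q1_D1_P2_Q2_D2_def by (rule of_nat_le_iff)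
  finally show ?thesis by simp
qed



definition V :: "(nat \<Rightarrow> nat) \<Rightarrow> nat \<Rightarrow> nat \<Rightarrow> nat" where "V G p y = entc p (G y)"
definition stp :: "(nat \<Rightarrow> nat) \<Rightarrow> nat \<Rightarrow> nat \<Rightarrow> nat \<Rightarrow> nat \<Rightarrow> nat" where
  "stp G p k r c = (if lhsr r (V G p (prod_encode (Suc k, c))) \<le> rhsr r (V G p (prod_encode (Suc k, c)))
     then V G p (prod_encode (Suc k, c)) else r)"
definition M :: "(nat \<Rightarrow> nat) \<Rightarrow> nat \<Rightarrow> nat \<Rightarrow> nat \<Rightarrow> nat" where
  "M G p n c = rec_nat (V G p (prod_encode (0, c))) (\<lambda>k r. stp G p k r c) n"
definition FF :: "(nat \<Rightarrow> nat) \<Rightarrow> nat \<Rightarrow> nat \<Rightarrow> nat" where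
  "FF G p x = M G p (pd1 x) (pd2 x)"

lemma prec_FF:
  assumes hG: "prec 1 (\<lambda>xs. G (xs ! 0))"
  shows "prec 1 (\<lambda>xs. FF G p (xs ! 0))"
proof -
  have pG: "prec n F1 \<Longrightarrow> prec n (\<lambda>xs. G (F1 xs))" for n F1 by (rule prec_comp1[OF hG])
  have pV: "prec n F1 \<Longrightarrow> prec n (\<lambda>xs. V G p (F1 xs))" for n F1
    unfolding V_def by (intro prec_entc pG)
  have "prec 2 (\<lambda>xs. rec_nat (V G p (prod_encode (0, xs ! 1))) (\<lambda>k r. stp G p k r (xs ! 1)) (xs ! 0))"
  proof (rule prec_rec2[where A="\<lambda>x y. V G p (prod_encode (0, y))" and B="\<lambda>k r x y. stp G p k r y"
        and C="\<lambda>x y. x"])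
    show "prec 2 (\<lambda>xs. V G p (prod_encode (0, xs ! 1)))" by (intro pV prec_pe prec_const prec_proj) simp
    show "prec 2 (\<lambda>xs. xs ! 0)" by (intro prec_proj) simp
    show "prec 4 (\<lambda>ys. stp G p (ys ! 0) (ys ! 1) (ys ! 3))"
      unfolding stp_def
      by (intro prec_ifle prec_lhsr prec_rhsr pV prec_pe prec_Suc prec_proj) simp_all
  qed
  then have "prec 2 (\<lambda>xs. M G p (xs ! 0) (xs ! 1))" unfolding M_def .
  then have "prec 1 (\<lambda>xs. M G p (pd1 (xs ! 0)) (pd2 (xs ! 0)))"
    by (rule prec_comp2) (intro prec_pd1 prec_pd2 prec_proj; simp)+
  then show ?thesis unfolding FF_def .
qed

lemma computable_prec: "computable G \<Longrightarrow> prec 1 (\<lambda>xs. G (xs ! 0))"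
  unfolding computable_def prec_def
  by (auto simp: length_Suc_conv)

lemma prec_computable: "prec 1 (\<lambda>xs. G (xs ! 0)) \<Longrightarrow> computable G"
  unfolding computable_def prec_def
  by (auto simp: length_Suc_conv)

lemma FF_pe: "FF G p (prod_encode (n, c)) = M G p n c"
  using prod_decode_pd[of "prod_encode (n, c)"] by (simp add: FF_def)

lemma M_Suc: "M G p (Suc n) c = stp G p n (M G p n c) c"
  by (simp add: M_def)

lemma M_mono: "rat_decode (M G p n c) \<le> rat_decode (M G p (Suc n) c)"
  unfolding M_Suc stp_def by (auto simp: rle)

lemma M_ge: "k \<le> n \<Longrightarrow> rat_decode (V G p (prod_encode (k, c))) \<le> rat_decode (M G p n c)"
proof (induction n)
  case 0 then show ?case by (simp add: M_def)
next
  case (Suc n)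
  show ?case
  proof (cases "k = Suc n")
    case True then show ?thesis unfolding M_Suc stp_def by (auto simp: rle)
  next
    case False
    then have "rat_decode (V G p (prod_encode (k, c))) \<le> rat_decode (M G p n c)" using Suc by simp
    then show ?thesis using M_mono[of G p n c] by simp
  qed
qed

lemma M_att: "\<exists>k\<le>n. rat_decode (M G p n c) = rat_decode (V G p (prod_encode (k, c)))"
proof (induction n)
  case 0 then show ?case by (simp add: M_def)
next
  case (Suc n)
  then obtain k where "k \<le> n" "rat_decode (M G p n c) = rat_decode (V G p (prod_encode (k, c)))" by blast
  then show ?case unfolding M_Suc stp_def
    by (cases "lhsr (M G p n c) (V G p (prod_encode (Suc n, c))) \<le> rhsr (M G p n c) (V G p (prod_encode (Suc n, c)))")
       (auto intro: le_SucI)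
qed

lemma lc_from_approx:
  assumes G: "computable G" and sm: "semi_measure r"
    and le: "\<And>n s. real_of_rat (rat_decode (entc p (G (prod_encode (n, str_code s))))) \<le> r s"
    and conv: "\<And>s. (\<lambda>n. real_of_rat (rat_decode (entc p (G (prod_encode (n, str_code s)))))) \<longlonglongrightarrow> r s"
  shows "lower_computable_semi_measure r"
  unfolding lower_computable_semi_measure_def
proof (intro conjI exI[of _ "FF G p"] allI)
  show "semi_measure r" by (rule sm)
  show "computable (FF G p)" by (rule prec_computable[OF prec_FF[OF computable_prec[OF G]]])
  fix n s
  show "rat_decode (FF G p (prod_encode (n, str_code s))) \<le> rat_decode (FF G p (prod_encode (Suc n, str_code s)))"
    unfolding FF_pe by (rule M_mono)
next
  fix s
  let ?a = "\<lambda>n. real_of_rat (rat_decode (entc p (G (prod_encode (n, str_code s)))))"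
  let ?b = "\<lambda>n. real_of_rat (rat_decode (FF G p (prod_encode (n, str_code s))))"
  have ab: "?a n \<le> ?b n" for n
    unfolding FF_pe of_rat_less_eq using M_ge[of n n G p "str_code s"] by (simp add: V_def)
  have br: "?b n \<le> r s" for n
  proof -
    obtain k where "k \<le> n" "rat_decode (M G p n (str_code s)) = rat_decode (V G p (prod_encode (k, str_code s)))"
      using M_att by blast
    then show ?thesis unfolding FF_pe using le[of k s] by (simp add: V_def)
  qed
  show "?b \<longlonglongrightarrow> r s"
    by (rule tendsto_sandwich[OF _ _ conv tendsto_const]) (use ab br in auto)
qed



lemma qf_expand:
  assumes v: "v \<in> carrier_vec N" and A: "A \<in> carrier_mat N N"
  shows "conjugate v \<bullet> (A *\<^sub>v v) = (\<Sum>a<N. \<Sum>b<N. cnj (v $ a) * A $$ (a, b) * v $ b)"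
proof -
  have "conjugate v \<bullet> (A *\<^sub>v v) = (\<Sum>a<N. cnj (v $ a) * (\<Sum>b<N. A $$ (a, b) * v $ b))"
    unfolding scalar_prod_def using v A
    by (auto simp: atLeast0LessThan scalar_prod_def intro!: sum.cong)
  also have "\<dots> = (\<Sum>a<N. \<Sum>b<N. cnj (v $ a) * A $$ (a, b) * v $ b)"
    by (simp add: sum_distrib_left mult.assoc)
  finally show ?thesis .
qed

lemma psd_carrier: "psd N A \<Longrightarrow> A \<in> carrier_mat N N"
  unfolding psd_def hermitian_def by simp

lemma sum_one:
  fixes g :: "nat \<Rightarrow> 'a::comm_monoid_add"
  assumes "i < N" "\<And>a. a < N \<Longrightarrow> a \<noteq> i \<Longrightarrow> g a = 0"
  shows "(\<Sum>a<N. g a) = g i"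
proof -
  have "(\<Sum>a<N. g a) = (\<Sum>a\<in>{i}. g a)"
    by (rule sum.mono_neutral_right) (use assms in auto)
  then show ?thesis by simp
qed

lemma sum_two:
  fixes g :: "nat \<Rightarrow> 'a::comm_monoid_add"
  assumes "i < N" "j < N" "i \<noteq> j" "\<And>a. a < N \<Longrightarrow> a \<noteq> i \<Longrightarrow> a \<noteq> j \<Longrightarrow> g a = 0"
  shows "(\<Sum>a<N. g a) = g i + g j"
proof -
  have "(\<Sum>a<N. g a) = (\<Sum>a\<in>{i, j}. g a)"
    by (rule sum.mono_neutral_right) (use assms in auto)
  then show ?thesis using assms(3) by simp
qed

lemma psd_diag:
  assumes "psd N A" "i < N"
  shows "0 \<le> Re (A $$ (i, i))"
proof -
  have A: "A \<in> carrier_mat N N" using psd_carrier assms by blast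
  have u: "unit_vec N i \<in> carrier_vec N" by simp
  have "0 \<le> Re (conjugate (unit_vec N i) \<bullet> (A *\<^sub>v unit_vec N i))"
    using assms(1) u unfolding psd_def by blast
  also have "conjugate (unit_vec N i) \<bullet> (A *\<^sub>v unit_vec N i) = A $$ (i, i)"
    unfolding qf_expand[OF u A]
  proof -
    have inner: "(\<Sum>b<N. cnj (unit_vec N i $ a) * A $$ (a, b) * unit_vec N i $ b) = cnj (unit_vec N i $ a) * A $$ (a, i)" if "a < N" for a
      by (subst sum_one[OF assms(2)]) (use assms(2) that in auto)
    show "(\<Sum>a<N. \<Sum>b<N. cnj (unit_vec N i $ a) * A $$ (a, b) * unit_vec N i $ b) = A $$ (i, i)"
      by (simp add: inner, subst sum_one[OF assms(2)]) (use assms(2) in auto)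
  qed
  finally show ?thesis .
qed

lemma psd_diag_real:
  assumes "psd N A" "i < N"
  shows "A $$ (i, i) = complex_of_real (Re (A $$ (i, i)))"
proof -
  have "A $$ (i, i) = cnj (A $$ (i, i))" using assms unfolding psd_def hermitian_def by blast
  then have "Im (A $$ (i, i)) = 0" by (metis cnj.sel(2) neg_equal_zero)
  then show ?thesis by (simp add: complex_eq_iff)
qed

lemma psd_offdiag:
  assumes psd: "psd N A" and i: "i < N" and j: "j < N"
  shows "cmod (A $$ (i, j)) \<le> Re (A $$ (i, i)) + Re (A $$ (j, j))"
proof (cases "i = j")
  case True
  have e: "A $$ (i, i) = complex_of_real (Re (A $$ (i, i)))" by (rule psd_diag_real[OF psd i])
  have "cmod (A $$ (i, i)) = Re (A $$ (i, i))" using psd_diag[OF psd i] by (subst e) simp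
  then show ?thesis using True psd_diag[OF psd i] by simp
next
  case ij: False
  show ?thesis
  proof (cases "A $$ (i, j) = 0")
    case True then show ?thesis using psd_diag[OF psd i] psd_diag[OF psd j] by simp
  next
    case nz: False
    have A: "A \<in> carrier_mat N N" using psd_carrier psd by blast
    have herm: "A $$ (j, i) = cnj (A $$ (i, j))" using psd i j unfolding psd_def hermitian_def by blast
    define z where "z = A $$ (i, j)"
    define w where "w = cnj z / complex_of_real (cmod z)"
    have zn: "cmod z \<noteq> 0" using nz z_def by simp
    have zz: "cnj z * z = complex_of_real (cmod z ^ 2)"
      by (simp only: complex_norm_square mult.commute)
    have wz: "w * z = complex_of_real (cmod z)"
      unfolding w_def using zn zz by (simp add: power2_eq_square)
    have ww: "cnj w * w = 1"
      unfolding w_def using zn zz by (simp add: power2_eq_square mult.commute)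
    define v where "v = vec N (\<lambda>k. if k = i then 1 else if k = j then - w else 0)"
    have v: "v \<in> carrier_vec N" unfolding v_def by simp
    have vi: "v $ i = 1" "v $ j = - w" using i j ij unfolding v_def by auto
    have v0: "a < N \<Longrightarrow> a \<noteq> i \<Longrightarrow> a \<noteq> j \<Longrightarrow> v $ a = 0" for a unfolding v_def by simp
    have inner: "(\<Sum>b<N. cnj (v $ a) * A $$ (a, b) * v $ b) = cnj (v $ a) * A $$ (a, i) * v $ i + cnj (v $ a) * A $$ (a, j) * v $ j" for a
      by (rule sum_two[OF i j ij]) (use v0 in auto)
    have "conjugate v \<bullet> (A *\<^sub>v v) = (\<Sum>a<N. cnj (v $ a) * A $$ (a, i) * v $ i + cnj (v $ a) * A $$ (a, j) * v $ j)"
      unfolding qf_expand[OF v A] inner ..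
    also have "\<dots> = (cnj (v $ i) * A $$ (i, i) * v $ i + cnj (v $ i) * A $$ (i, j) * v $ j)
        + (cnj (v $ j) * A $$ (j, i) * v $ i + cnj (v $ j) * A $$ (j, j) * v $ j)"
      by (rule sum_two[OF i j ij]) (use v0 in auto)
    also have "\<dots> = A $$ (i, i) + A $$ (j, j) * (cnj w * w) - (w * z + cnj (w * z))"
      unfolding vi herm z_def by (simp add: algebra_simps)
    also have "\<dots> = A $$ (i, i) + A $$ (j, j) - 2 * complex_of_real (cmod z)"
      unfolding ww wz by simp
    finally have "Re (conjugate v \<bullet> (A *\<^sub>v v)) = Re (A $$ (i, i)) + Re (A $$ (j, j)) - 2 * cmod z"
      by simp
    moreover have "0 \<le> Re (conjugate v \<bullet> (A *\<^sub>v v))" using psd v unfolding psd_def by blast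
    moreover have "0 \<le> cmod z" by simp
    ultimately show ?thesis unfolding z_def by linarith
  qed
qed

lemma psd_abs_sum:
  assumes "psd N A"
  shows "(\<Sum>a<N. \<Sum>b<N. cmod (A $$ (a, b))) \<le> 2 * real N * (\<Sum>a<N. Re (A $$ (a, a)))"
proof -
  have "(\<Sum>a<N. \<Sum>b<N. cmod (A $$ (a, b))) \<le> (\<Sum>a<N. \<Sum>b<N. Re (A $$ (a, a)) + Re (A $$ (b, b)))"
    by (intro sum_mono psd_offdiag[OF assms]) auto
  also have "\<dots> = 2 * real N * (\<Sum>a<N. Re (A $$ (a, a)))"
    by (simp add: sum.distrib sum_distrib_left sum.swap[of "\<lambda>a b. Re (A $$ (b, b))"] algebra_simps)
  finally show ?thesis .
qed



lemma rat_decode_0: "rat_decode 0 = 0"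
proof -
  have "prod_decode 0 = (0, 0)" by (simp add: prod_decode_def prod_decode_aux.simps)
  then show ?thesis by (simp add: rat_decode_def int_decode_def sum_decode_def)
qed

lemma entry_eq:
  assumes "i < N"
  shows "real_of_rat (rat_decode (entc (i * N + i) c)) = Re (mat_decode N c $$ (i, i))"
  using assms
  by (simp add: mat_decode_def Let_def entc_eq gauss_decode_def prod_decode_pd rat_decode_0)

lemma minus_zero_mat: "A \<in> carrier_mat N N \<Longrightarrow> A - 0\<^sub>m N N = (A :: complex mat)"
  by (rule eq_matI) auto

lemma loewner_psd: "loewner_le N (0\<^sub>m N N) A \<Longrightarrow> psd N A"
  unfolding loewner_le_def using minus_zero_mat[of A N] by (simp add: hermitian_def)

lemma loewner_diag:
  assumes "loewner_le N A B" "i < N"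
  shows "Re (A $$ (i, i)) \<le> Re (B $$ (i, i))"
proof -
  have c: "A \<in> carrier_mat N N" "B \<in> carrier_mat N N" using assms(1) unfolding loewner_le_def hermitian_def by auto
  have "0 \<le> Re ((B - A) $$ (i, i))" using psd_diag assms unfolding loewner_le_def by blast
  then show ?thesis using c assms(2) by simp
qed

lemma povm_semi_measure:
  assumes P: "semi_POVM N R" and i: "i < N"
  shows "semi_measure (\<lambda>s. Re (R s $$ (i, i)))"
proof -
  have nn: "0 \<le> Re (R s $$ (i, i))" for s
    using P i loewner_psd psd_diag unfolding semi_POVM_def by blast
  have fin: "sum (\<lambda>s. Re (R s $$ (i, i))) F \<le> 1" if "finite F" for F
  proof -
    have "Re (mat_sum N R F $$ (i, i)) \<le> Re (1\<^sub>m N $$ (i, i))"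
      using P that i unfolding semi_POVM_def by (intro loewner_diag) auto
    then show ?thesis using i by (simp add: mat_sum_def Re_sum)
  qed
  have sm: "(\<lambda>s. Re (R s $$ (i, i))) summable_on UNIV"
    by (rule nonneg_bdd_above_summable_on) (use nn fin in \<open>auto intro!: bdd_aboveI2\<close>)
  have "(\<Sum>\<^sub>\<infinity>s. Re (R s $$ (i, i))) \<le> 1"
    by (rule infsum_le_finite_sums[OF sm]) (use fin in auto)
  then show ?thesis unfolding semi_measure_def using nn sm by blast
qed

lemma povm_lc:
  assumes P: "lower_computable_semi_POVM N R" and i: "i < N"
  shows "lower_computable_semi_measure (\<lambda>s. Re (R s $$ (i, i)))"
proof -
  obtain G where G: "computable G"
    "\<And>s. mat_tendsto N (\<lambda>n. mat_decode N (G (prod_encode (n, str_code s)))) (R s)"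
    "\<And>n s. loewner_le N (mat_decode N (G (prod_encode (n, str_code s)))) (R s)"
    using P unfolding lower_computable_semi_POVM_def by blast
  have sp: "semi_POVM N R" using P unfolding lower_computable_semi_POVM_def by blast
  show ?thesis
  proof (rule lc_from_approx[OF G(1) povm_semi_measure[OF sp i], where p = "i * N + i"])
    fix n s
    show "real_of_rat (rat_decode (entc (i * N + i) (G (prod_encode (n, str_code s))))) \<le> Re (R s $$ (i, i))"
      unfolding entry_eq[OF i] by (rule loewner_diag[OF G(3) i])
  next
    fix s
    have "(\<lambda>n. mat_decode N (G (prod_encode (n, str_code s))) $$ (i, i)) \<longlonglongrightarrow> R s $$ (i, i)"
      using G(2)[of s] i unfolding mat_tendsto_def by blast
    then show "(\<lambda>n. real_of_rat (rat_decode (entc (i * N + i) (G (prod_encode (n, str_code s)))))) \<longlonglongrightarrow> Re (R s $$ (i, i))"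
      unfolding entry_eq[OF i] by (rule tendsto_Re)
  qed
qed

lemma term_bound:
  assumes "cmod a \<le> 1" "cmod b \<le> 1"
  shows "Re (cnj a * x * b) \<le> cmod x"
proof -
  have "Re (cnj a * x * b) \<le> cmod (cnj a * x * b)" by (rule complex_Re_le_cmod)
  also have "\<dots> = cmod a * cmod x * cmod b" by (simp add: norm_mult)
  also have "\<dots> \<le> 1 * cmod x * 1" using assms by (intro mult_mono) auto
  finally show ?thesis by simp
qed

lemma unit_bound:
  assumes "unit_vector N \<psi>" "a < N"
  shows "cmod (\<psi> $ a) \<le> 1"
proof -
  have "(cmod (\<psi> $ a))\<^sup>2 \<le> (\<Sum>i<N. (cmod (\<psi> $ i))\<^sup>2)"
    by (rule member_le_sum) (use assms in auto)
  then have "(cmod (\<psi> $ a))\<^sup>2 \<le> 1\<^sup>2" using assms unfolding unit_vector_def by simp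
  then show ?thesis by (rule power2_le_imp_le) simp
qed

lemma qf_bound:
  assumes "unit_vector N \<psi>" "psd N A"
  shows "Re (conjugate \<psi> \<bullet> (A *\<^sub>v \<psi>)) \<le> 2 * real N * (\<Sum>a<N. Re (A $$ (a, a)))"
proof -
  have v: "\<psi> \<in> carrier_vec N" using assms unfolding unit_vector_def by blast
  have "Re (conjugate \<psi> \<bullet> (A *\<^sub>v \<psi>)) = (\<Sum>a<N. \<Sum>b<N. Re (cnj (\<psi> $ a) * A $$ (a, b) * \<psi> $ b))"
    unfolding qf_expand[OF v psd_carrier[OF assms(2)]] by (simp add: Re_sum)
  also have "\<dots> \<le> (\<Sum>a<N. \<Sum>b<N. cmod (A $$ (a, b)))"
    by (intro sum_mono term_bound unit_bound[OF assms(1)]) auto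
  also have "\<dots> \<le> 2 * real N * (\<Sum>a<N. Re (A $$ (a, a)))" by (rule psd_abs_sum[OF assms(2)])
  finally show ?thesis .
qed

lemma tr_bound:
  assumes "density_matrix N \<rho>" "psd N A"
  shows "Re (mat_trace N (\<rho> * A)) \<le> 4 * real N * (\<Sum>a<N. Re (A $$ (a, a)))"
proof -
  have pr: "psd N \<rho>" using assms(1) loewner_psd unfolding density_matrix_def by blast
  have cr: "\<rho> \<in> carrier_mat N N" and cA: "A \<in> carrier_mat N N" using psd_carrier pr assms(2) by auto
  have tr1: "(\<Sum>a<N. Re (\<rho> $$ (a, a))) = 1"
    using assms(1) unfolding density_matrix_def mat_trace_def by (simp add: Re_sum[symmetric])
  have d1: "Re (\<rho> $$ (a, a)) \<le> 1" if "a < N" for a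
  proof -
    have "Re (\<rho> $$ (a, a)) \<le> (\<Sum>a<N. Re (\<rho> $$ (a, a)))"
      by (rule member_le_sum) (use that psd_diag[OF pr] in auto)
    then show ?thesis using tr1 by simp
  qed
  have rb: "cmod (\<rho> $$ (a, b)) \<le> 2" if "a < N" "b < N" for a b
    using psd_offdiag[OF pr that] d1[OF that(1)] d1[OF that(2)] by simp
  have "mat_trace N (\<rho> * A) = (\<Sum>a<N. \<Sum>b<N. \<rho> $$ (a, b) * A $$ (b, a))"
    unfolding mat_trace_def using cr cA
    by (auto simp: scalar_prod_def atLeast0LessThan intro!: sum.cong)
  then have "Re (mat_trace N (\<rho> * A)) = (\<Sum>a<N. \<Sum>b<N. Re (\<rho> $$ (a, b) * A $$ (b, a)))"
    by (simp add: Re_sum)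
  also have "\<dots> \<le> (\<Sum>a<N. \<Sum>b<N. 2 * cmod (A $$ (b, a)))"
  proof (intro sum_mono)
    fix a b assume "a \<in> {..<N}" "b \<in> {..<N}"
    then have "cmod (\<rho> $$ (a, b)) \<le> 2" using rb by auto
    then have "cmod (\<rho> $$ (a, b)) * cmod (A $$ (b, a)) \<le> 2 * cmod (A $$ (b, a))"
      by (intro mult_right_mono) auto
    then show "Re (\<rho> $$ (a, b) * A $$ (b, a)) \<le> 2 * cmod (A $$ (b, a))"
      using complex_Re_le_cmod[of "\<rho> $$ (a, b) * A $$ (b, a)"] by (simp add: norm_mult)
  qed
  also have "\<dots> = 2 * (\<Sum>a<N. \<Sum>b<N. cmod (A $$ (a, b)))"
    by (simp only: sum_distrib_left) (rule sum.swap)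
  also have "\<dots> \<le> 2 * (2 * real N * (\<Sum>a<N. Re (A $$ (a, a))))"
    using psd_abs_sum[OF assms(2)] by simp
  finally show ?thesis by simp
qed

theorem mainTheorem5:
  fixes N :: nat and m :: "bool list \<Rightarrow> real" and R :: "bool list \<Rightarrow> complex mat"
  assumes "0 < N"
    and "universal_probability m"
    and "lower_computable_semi_POVM N R"
  shows "(\<exists>c>0. \<forall>\<psi> s. unit_vector N \<psi> \<longrightarrow>
            Re (conjugate \<psi> \<bullet> (R s *\<^sub>v \<psi>)) \<le> c * m s)
       \<and> (\<exists>c>0. \<forall>\<rho> s. density_matrix N \<rho> \<longrightarrow> Re (mat_trace N (\<rho> * R s)) \<le> c * m s)"
proof -
  have U: "lower_computable_semi_measure m"
    "\<And>r. lower_computable_semi_measure r \<Longrightarrow> \<exists>c>0. \<forall>s. c * r s \<le> m s"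
    using assms(2) unfolding universal_probability_def by auto
  have mnn: "0 \<le> m s" for s using U(1) unfolding lower_computable_semi_measure_def semi_measure_def by blast
  have sp: "semi_POVM N R" using assms(3) unfolding lower_computable_semi_POVM_def by blast
  have Rpsd: "psd N (R s)" for s using sp loewner_psd unfolding semi_POVM_def by blast
  have ex: "\<forall>i. \<exists>c. i < N \<longrightarrow> c > 0 \<and> (\<forall>s. c * Re (R s $$ (i, i)) \<le> m s)"
    using U(2)[OF povm_lc[OF assms(3)]] by blast
  obtain C where C: "\<And>i. i < N \<Longrightarrow> C i > 0 \<and> (\<forall>s. C i * Re (R s $$ (i, i)) \<le> m s)"
    using choice[OF ex] by blast
  define K where "K = (\<Sum>i<N. 1 / C i)"
  have K0: "0 \<le> K" unfolding K_def using C by (intro sum_nonneg) (simp add: less_imp_le)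
  have trK: "(\<Sum>a<N. Re (R s $$ (a, a))) \<le> K * m s" for s
  proof -
    have "(\<Sum>a<N. Re (R s $$ (a, a))) \<le> (\<Sum>a<N. m s / C a)"
    proof (rule sum_mono)
      fix a assume "a \<in> {..<N}"
      then have "C a > 0" "C a * Re (R s $$ (a, a)) \<le> m s" using C by auto
      then show "Re (R s $$ (a, a)) \<le> m s / C a" by (simp add: field_simps)
    qed
    also have "\<dots> = K * m s" unfolding K_def by (simp add: sum_distrib_right)
    finally show ?thesis .
  qed
  have P1: "\<exists>c>0. \<forall>\<psi> s. unit_vector N \<psi> \<longrightarrow> Re (conjugate \<psi> \<bullet> (R s *\<^sub>v \<psi>)) \<le> c * m s"
  proof (intro exI[of _ "2 * real N * K + 1"] conjI allI impI)
    show "0 < 2 * real N * K + 1" using K0 by (intro add_nonneg_pos) auto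
    fix \<psi> s assume "unit_vector N \<psi>"
    then have "Re (conjugate \<psi> \<bullet> (R s *\<^sub>v \<psi>)) \<le> 2 * real N * (\<Sum>a<N. Re (R s $$ (a, a)))"
      by (rule qf_bound[OF _ Rpsd])
    also have "\<dots> \<le> 2 * real N * (K * m s)" using trK[of s] by (intro mult_left_mono) auto
    also have "\<dots> \<le> (2 * real N * K + 1) * m s" using mnn[of s] by (simp add: algebra_simps)
    finally show "Re (conjugate \<psi> \<bullet> (R s *\<^sub>v \<psi>)) \<le> (2 * real N * K + 1) * m s" .
  qed
  have P2: "\<exists>c>0. \<forall>\<rho> s. density_matrix N \<rho> \<longrightarrow> Re (mat_trace N (\<rho> * R s)) \<le> c * m s"
  proof (intro exI[of _ "4 * real N * K + 1"] conjI allI impI)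
    show "0 < 4 * real N * K + 1" using K0 by (intro add_nonneg_pos) auto
    fix \<rho> s assume "density_matrix N \<rho>"
    then have "Re (mat_trace N (\<rho> * R s)) \<le> 4 * real N * (\<Sum>a<N. Re (R s $$ (a, a)))"
      by (rule tr_bound[OF _ Rpsd])
    also have "\<dots> \<le> 4 * real N * (K * m s)" using trK[of s] by (intro mult_left_mono) auto
    also have "\<dots> \<le> (4 * real N * K + 1) * m s" using mnn[of s] by (simp add: algebra_simps)
    finally show "Re (mat_trace N (\<rho> * R s)) \<le> (4 * real N * K + 1) * m s" .
  qed
  show ?thesis using P1 P2 by blast
qed

end
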